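(* Suppose $c, \Delta, t\in\mathbb{N}^+$ and $\Delta< t$. Let $V\subseteq [t]^c$. If there exists a function $\theta: V\to [c]$ such that for all $i\in [c]$ we have \[ \Big|\big\{\mathbf{v}(i)\mid \text{$\mathbf{v}\in V$ and $\theta(\mathbf{v})= i$}\big\}\Big| \le t- \Delta, \] then $|V|\le t^c- \Delta^c$.
   Context: For $n\in\mathbb N$, $[n]:=\{1,\ldots,n\}$, and $\mathbb N^+$ denotes the positive integers. For a tuple $\mathbf{v}\in[t]^c$ and $i\in[c]$, $\mathbf{v}(i)$ denotes the $i$-th coordinate of $\mathbf{v}$. *)

theory Defs
  imports Main "HOL-Library.FuncSet"
begin

text \<open>The cube [t]^c: tuples v indexed by {1..c} with entries in {1..t},
  represented as extensional functions nat => nat (undefined outside {1..c}).\<close>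
definition cube :: "nat \<Rightarrow> nat \<Rightarrow> (nat \<Rightarrow> nat) set" where
  "cube t c = PiE {1..c} (\<lambda>_. {1..t})"

end

theory Submission
  imports Defs
begin

theorem lemma4p5:
  fixes c \<Delta> t :: nat and V :: "(nat \<Rightarrow> nat) set"
  assumes "c > 0" and "\<Delta> > 0" and "t > 0" and "\<Delta> < t"
    and "V \<subseteq> cube t c"
    and "\<exists>\<theta>. (\<forall>v\<in>V. \<theta> v \<in> {1..c}) \<and>
          (\<forall>i\<in>{1..c}. card {v i | v. v \<in> V \<and> \<theta> v = i} \<le> t - \<Delta>)"
  shows "card V \<le> t ^ c - \<Delta> ^ c"
proof -
  obtain \<theta> where th: "\<forall>v\<in>V. \<theta> v \<in> {1..c}"
    and cd: "\<forall>i\<in>{1..c}. card {v i | v. v \<in> V \<and> \<theta> v = i} \<le> t - \<Delta>"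
    using assms(6) by blast
  define S where "S i = {v i | v. v \<in> V \<and> \<theta> v = i}" for i
  define T where "T i = {1..t} - S i" for i
  have Ssub: "S i \<subseteq> {1..t}" if "i \<in> {1..c}" for i
    using assms(5) that unfolding S_def cube_def by (auto simp: PiE_def Pi_def)
  have Tc: "card (T i) \<ge> \<Delta>" if "i \<in> {1..c}" for i
  proof -
    have "card (T i) = t - card (S i)"
      unfolding T_def using Ssub[OF that] by (simp add: card_Diff_subset finite_subset)
    moreover have "card (S i) \<le> t - \<Delta>" using cd that unfolding S_def by blast
    ultimately show ?thesis using assms(4) by linarith
  qed
  define B where "B = PiE {1..c} T"
  have Bsub: "B \<subseteq> cube t c" unfolding B_def cube_def T_def by (rule PiE_mono) auto
  have disj: "V \<inter> B = {}"
  proof (rule ccontr)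
    assume "V \<inter> B \<noteq> {}"
    then obtain v where v: "v \<in> V" "v \<in> B" by blast
    let ?i = "\<theta> v"
    have i: "?i \<in> {1..c}" using th v by blast
    have "v ?i \<in> S ?i" unfolding S_def using v by blast
    moreover have "v ?i \<in> T ?i" using v(2) i unfolding B_def by (auto simp: PiE_def Pi_def)
    ultimately show False unfolding T_def by blast
  qed
  have fc: "finite (cube t c)" unfolding cube_def by (simp add: finite_PiE)
  have cc: "card (cube t c) = t ^ c" unfolding cube_def by (simp add: card_PiE)
  have cB: "card B = (\<Prod>i\<in>{1..c}. card (T i))" unfolding B_def by (simp add: card_PiE)
  have "(\<Prod>i\<in>{1..c}. \<Delta>) \<le> (\<Prod>i\<in>{1..c}. card (T i))"
    by (rule prod_mono) (use Tc in auto)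
  hence B1: "\<Delta> ^ c \<le> card B" using cB by simp
  have "V \<subseteq> cube t c - B" using assms(5) disj by blast
  hence "card V \<le> card (cube t c - B)" using fc by (intro card_mono) auto
  also have "\<dots> = t ^ c - card B" using Bsub fc cc by (simp add: card_Diff_subset finite_subset)
  finally show ?thesis using B1 by linarith
qed

end
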